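(* In the algebra $\mathcal A$, the quantum superdeterminant $\mathcal D_h = a d^{-1} - \beta d^{-1}\gamma d^{-1}$ commutes with each of the generators $a,\beta,\gamma,d$.
   Context: Let $h$ be an odd (Grassmann) parameter with $h^2=0$. Throughout, even elements commute with everything and odd elements anticommute with each other. Let $\mathcal A$ be the associative $\mathbb Z_2$-graded algebra generated by even invertible elements $a,d$ and odd elements $\beta,\gamma$ (with $h$ commuting with $a,d$ and anticommuting with $\beta,\gamma$), subject to the relations $a\beta=\beta a$, $a\gamma=\gamma a+h a^2(1-\mathcal D_h^{-1})$, $d\beta=\beta d$, $d\gamma=\gamma d+h d^2(\mathcal D_h-1)$, $\beta^2=0$, $\gamma^2=h\gamma d(1-\mathcal D_h)$, $\beta\gamma=-\gamma\beta+h\beta d(1-\mathcal D_h)$, $ad=da+h\beta d(\mathcal D_h-1)$, where $\mathcal D_h=ad^{-1}-\beta d^{-1}\gamma d^{-1}$ is assumed invertible. This algebra is called the quantum supergroup $GL_h(1|1)$, with $T=\begin{pmatrix} a&\beta\\ \gamma& d\end{pmatrix}$. *)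

theory Defs
  imports Complex_Main
begin

text \<open>Quantum superdeterminant D_h = a d^{-1} - beta d^{-1} gamma d^{-1},
  where di denotes the (two-sided) inverse of d.\<close>
definition qsdet :: "'a::ring_1 \<Rightarrow> 'a \<Rightarrow> 'a \<Rightarrow> 'a \<Rightarrow> 'a" where
  "qsdet a beta gamma di = a * di - beta * di * gamma * di"

end

theory Submission
  imports Defs
begin

lemma AR: "(x::'a::ring_1) * y = r \<Longrightarrow> x * (y * z) = r * z"
  by (metis mult.assoc)

lemma core:
  fixes a d di beta gamma h D Di :: "'a::ring_1"
  assumes d_inv: "d * di = 1" "di * d = 1"
    and D_def: "D = a * di - beta * di * gamma * di"
    and D_inv: "D * Di = 1" "Di * D = 1"
    and h_a: "h * a = a * h" and h_d: "h * d = d * h"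
    and h_beta: "h * beta = - (beta * h)" and h_gamma: "h * gamma = - (gamma * h)"
    and h_sq: "h * h = 0"
    and r1: "a * beta = beta * a"
    and r2: "a * gamma = gamma * a + h * a^2 * (1 - Di)"
    and r3: "d * beta = beta * d"
    and r4: "d * gamma = gamma * d + h * d^2 * (D - 1)"
    and r5: "beta * beta = 0"
    and r6: "gamma * gamma = h * gamma * d * (1 - D)"
    and r7: "beta * gamma = - (gamma * beta) + h * beta * d * (1 - D)"
    and r8: "a * d = d * a + h * beta * d * (D - 1)"
  shows "D * a = a * D \<and> D * beta = beta * D \<and> D * gamma = gamma * D \<and> D * d = d * D"
proof -
  have hdi: "di * h = h * di"
    by (metis d_inv h_d mult.assoc mult_1_left mult_1_right)
  have R: "a * h = h * a" "d * h = h * d" "di * h = h * di" "beta * h = - (h * beta)"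
     "gamma * h = - (h*gamma)" "h * h = 0"
    using h_a h_d hdi h_beta h_gamma h_sq by (auto simp: minus_equation_iff)
  have hD: "D * h = h * D"
    unfolding D_def by (simp add: algebra_simps R R[THEN AR])
  have dib: "di * beta = beta * di"
    by (metis d_inv r3 mult.assoc mult_1_left mult_1_right)
  have gdi: "gamma * di = di * gamma + h * d * (D - 1) * di"
  proof -
    have "di * (d * gamma) * di = di * (gamma * d + h * d^2 * (D - 1)) * di" using r4 by simp
    thus ?thesis by (simp add: algebra_simps power2_eq_square R R[THEN AR] d_inv d_inv[THEN AR])
  qed
  have dia: "di * a = a * di + h * beta * (D - 1) * di"
  proof -
    have "di * (a * d) * di = di * (d * a + h * beta * d * (D - 1)) * di" using r8 by simp
    thus ?thesis by (simp add: algebra_simps R R[THEN AR] d_inv d_inv[THEN AR] dib dib[THEN AR])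
  qed
  have S: "beta * beta = 0" "a * beta = beta * a" "d * beta = beta * d" "di * beta = beta * di"
    "gamma * beta = - (beta * gamma) + h * beta * d * (1 - D)"
    "d * a = a * d - h * beta * d * (D - 1)"
    "di * a = a * di + h * beta * (D - 1) * di"
    "d * di = 1" "di * d = 1"
    "gamma * a = a * gamma - h * a * a * (1 - Di)"
    "gamma * d = d * gamma - h * d * d * (D - 1)"
    "gamma * di = di * gamma + h * d * (D - 1) * di"
    "gamma * gamma = h * gamma * d * (1 - D)"
    using r5 r1 r3 dib r7 r8 dia d_inv r2 r4 gdi r6 by (auto simp: algebra_simps power2_eq_square)
  have Dd: "D * d = d * D"
    unfolding D_def by (simp add: algebra_simps R R[THEN AR] S S[THEN AR])
  have Ddi: "D * di = di * D"
    by (metis Dd d_inv mult.assoc mult_1_left mult_1_right)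
  have hDi: "Di * h = h * Di"
    by (metis hD D_inv mult.assoc mult_1_left mult_1_right)
  have T: "D * d = d * D" "D * di = di * D" "D * h = h * D" "Di * h = h * Di"
    using Dd Ddi hD hDi by auto
  have x1: "h * (beta * (di * (D * beta))) = 0"
    unfolding D_def by (simp add: algebra_simps R R[THEN AR] S S[THEN AR] T T[THEN AR])
  have Db: "D * beta = beta * D"
    unfolding D_def using x1 by (simp add: algebra_simps R R[THEN AR] S S[THEN AR] T T[THEN AR])
  have x2: "h * (beta * (di * (D * a))) = h * (beta * (a * (a * (di * di))))"
    unfolding D_def by (simp add: algebra_simps R R[THEN AR] S S[THEN AR] T T[THEN AR])
  have x4: "h * (beta * (a * D)) = h * (beta * (a * (a * di)))"
    unfolding D_def by (simp add: algebra_simps R R[THEN AR] S S[THEN AR] T T[THEN AR])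
  have Didi: "di * Di = Di * di"
    by (metis Ddi D_inv mult.assoc mult_1_left mult_1_right)
  have x3: "h * (beta * (a * (a * (di * (di * Di))))) = h * (beta * (a * di))"
  proof -
    have "h * (beta * (a * (a * (di * (di * Di))))) = h * (beta * (a * (a * di))) * Di * di"
      by (simp add: Didi[symmetric] Didi[symmetric, THEN AR] mult.assoc)
    also have "\<dots> = h * (beta * (a * D)) * Di * di" by (simp add: x4)
    also have "\<dots> = h * (beta * (a * di))" by (simp add: mult.assoc D_inv)
    finally show ?thesis .
  qed
  have Da: "D * a = a * D"
    unfolding D_def using x2 x3 by (simp add: algebra_simps R R[THEN AR] S S[THEN AR] T T[THEN AR] Db Db[THEN AR])
  have y1: "h*(beta*(di*(D*gamma))) = h*(beta*(di*(gamma*D)))"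
    unfolding D_def by (simp add: algebra_simps R R[THEN AR] S S[THEN AR] T T[THEN AR])
  have y3: "h*(a*D) = h*(a*(a*di)) - h*(beta*(di*(gamma*D)))"
    unfolding D_def by (simp add: algebra_simps R R[THEN AR] S S[THEN AR] T T[THEN AR])
  have y4: "h*(beta*(a*(di*(gamma*di)))) = h*(beta*(di*(gamma*D)))"
    unfolding D_def by (simp add: algebra_simps R R[THEN AR] S S[THEN AR] T T[THEN AR])
  have y5: "h*(a*(a*di)) = h*(a*D) + h*(beta*(di*(gamma*D)))"
    unfolding D_def by (simp add: algebra_simps R R[THEN AR] S S[THEN AR] T T[THEN AR])
  have y2: "h*(a*(a*(Di*di))) = h*a + h*(beta*(di*gamma))"
  proof -
    have "h*(a*(a*(Di*di))) = h*(a*(a*di)) * Di"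
      by (simp add: Didi mult.assoc)
    also have "\<dots> = (h*(a*D) + h*(beta*(di*(gamma*D)))) * Di" by (simp add: y5)
    also have "\<dots> = h*a + h*(beta*(di*gamma))" by (simp add: algebra_simps D_inv)
    finally show ?thesis .
  qed
  have Dg: "D * gamma = gamma * D"
    unfolding D_def using y1 y2 y3 by (simp add: algebra_simps R R[THEN AR] S S[THEN AR] T T[THEN AR] Db Db[THEN AR] Da Da[THEN AR])
  show ?thesis using Da Db Dg Dd by blast
qed

theorem mainTheorem1:
  fixes a ai d di beta gamma h Di :: "'a::real_algebra_1"
  assumes a_inv: "a * ai = 1" "ai * a = 1"
    and d_inv: "d * di = 1" "di * d = 1"
    and D_inv: "qsdet a beta gamma di * Di = 1" "Di * qsdet a beta gamma di = 1"
    and h_a: "h * a = a * h" and h_d: "h * d = d * h"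
    and h_beta: "h * beta = - (beta * h)" and h_gamma: "h * gamma = - (gamma * h)"
    and h_sq: "h * h = 0"
    and r1: "a * beta = beta * a"
    and r2: "a * gamma = gamma * a + h * a^2 * (1 - Di)"
    and r3: "d * beta = beta * d"
    and r4: "d * gamma = gamma * d + h * d^2 * (qsdet a beta gamma di - 1)"
    and r5: "beta * beta = 0"
    and r6: "gamma * gamma = h * gamma * d * (1 - qsdet a beta gamma di)"
    and r7: "beta * gamma = - (gamma * beta) + h * beta * d * (1 - qsdet a beta gamma di)"
    and r8: "a * d = d * a + h * beta * d * (qsdet a beta gamma di - 1)"
  shows "qsdet a beta gamma di * a = a * qsdet a beta gamma di
       \<and> qsdet a beta gamma di * beta = beta * qsdet a beta gamma di
       \<and> qsdet a beta gamma di * gamma = gamma * qsdet a beta gamma di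
       \<and> qsdet a beta gamma di * d = d * qsdet a beta gamma di"
  using core[OF d_inv qsdet_def D_inv h_a h_d h_beta h_gamma h_sq r1 r2 r3 r4 r5 r6 r7 r8] by blast

end
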